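(* Suppose $\pi$ is a QSD of $(X_t)_{0\le t<\tau_\partial}$ with $\pi\in\mathcal P_\infty(\Lambda)$, and that the adjoint Dobrushin condition (AD) holds with function $\psi$, time $t_0$, constant $c_0'>0$ and probability measure $\nu'$. Then $\nu'\ll\Lambda$, $\nu'(\frac{d\pi}{d\Lambda})>0$, and $(X_t)$ and $\pi$ satisfy the reverse Dobrushin condition (RD) with the same time $t_0$, the constant $$c_0:=\frac{c_0'\,\nu'(\frac{d\pi}{d\Lambda})}{\|\psi\|_\infty\|1/\psi\|_\infty\|\frac{d\pi}{d\Lambda}\|_{L^\infty(\Lambda)}}\in(0,1],$$ and the probability measure $\nu:=\frac{\frac{d\pi}{d\Lambda}\nu'}{\nu'(\frac{d\pi}{d\Lambda})}$.
   Context: $\chi$ is a metric space with Borel $\sigma$-algebra, equipped with a distinguished $\sigma$-finite Borel measure $\Lambda$ of full support. $(X_t)_{0\le t<\tau_\partial}$ is a killed Markov process on $\chi$ (discrete or continuous time) with absorption time $\tau_\partial$, submarkovian semigroup $P_t(x,A)=\mathbb P_x(X_t\in A,\tau_\partial>t)$; $K1(x)=K(x,\chi)$. A QSD is a probability measure $\pi$ with $\mathbb P_\pi(X_t\in\cdot\mid\tau_\partial>t)=\pi$ for all $t$. $\mathcal P_\infty(\Lambda)$ = probability measures $\ll\Lambda$ with density in $L^\infty(\Lambda)$; for a measure $m$ and function $f$, $fm$ denotes the measure $f\,dm$. $\mathcal B_{b,\gg}(\chi)$ = bounded Borel functions with strictly positive infimum. (AD) Adjoint Dobrushin condition: there exist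 $\psi\in\mathcal B_{b,\gg}(\chi)$, $t_0>0$, $a>0$ and a submarkovian kernel $\tilde P$ with $\psi(x)\Lambda(dx)P_{t_0}(x,dy)=a\psi(y)\Lambda(dy)\tilde P(y,dx)$ as measures on $\chi\times\chi$, $\tilde P1(y)>0$ for $\Lambda$-a.e. $y$, and there exist $c_0'>0$ and $\nu'\in\mathcal P(\chi)$, not mutually singular with $\pi$, such that $\tilde P(y,\cdot)/\tilde P1(y)\ge c_0'\nu'(\cdot)$ for $\Lambda$-a.e. $y$. (RD): there exist $t_0>0$ and a submarkovian kernel $R$ with $\pi(dx)P_{t_0}(x,dy)=\pi(dy)R(y,dx)$, and $c_0>0$, $\nu\in\mathcal P(\chi)$ with $R(y,\cdot)/R1(y)\ge c_0\nu$ for $\pi$-a.e. $y$. *)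

theory Defs
  imports "HOL-Probability.Probability"
begin

definition mutually_singular :: "'a measure \<Rightarrow> 'a measure \<Rightarrow> bool" where
  "mutually_singular M N \<longleftrightarrow>
     (\<exists>A\<in>sets M. emeasure M A = 0 \<and> emeasure N (space N - A) = 0)"

definition submarkov_kernel :: "('a::topological_space \<Rightarrow> 'a measure) \<Rightarrow> bool" where
  "submarkov_kernel K \<longleftrightarrow> K \<in> borel \<rightarrow>\<^sub>M subprob_algebra borel"

definition reverse_dobrushin ::
  "('a::topological_space \<Rightarrow> 'a measure) \<Rightarrow> 'a measure \<Rightarrow> real \<Rightarrow> 'a measure \<Rightarrow> bool" where
  "reverse_dobrushin Pt0 qsd c0 nu \<longleftrightarrow>
     (\<exists>R. submarkov_kernel R \<and>
        (\<forall>C\<in>sets (borel \<Otimes>\<^sub>M borel).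
           (\<integral>\<^sup>+x. (\<integral>\<^sup>+y. indicator C (x,y) \<partial>Pt0 x) \<partial>qsd)
         = (\<integral>\<^sup>+y. (\<integral>\<^sup>+x. indicator C (x,y) \<partial>R y) \<partial>qsd)) \<and>
        (AE y in qsd. \<forall>A\<in>sets borel.
           measure (R y) A / measure (R y) UNIV \<ge> c0 * measure nu A))"

end

theory Submission
  imports Defs
begin

lemma kern_sets: "K \<in> borel \<rightarrow>\<^sub>M subprob_algebra borel \<Longrightarrow> sets (K x) = sets borel"
  by (rule subprob_measurableD(2)) auto

lemma kern_subprob: "K \<in> borel \<rightarrow>\<^sub>M subprob_algebra borel \<Longrightarrow> subprob_space (K x)"
  by (rule subprob_space_kernel) auto

lemma frac_bound:
  fixes L X Y U :: real
  assumes "0 \<le> L" "L \<le> X" "X \<le> Y" "Y \<le> U" "0 < U"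
  shows "L / U \<le> X / Y"
proof (cases "Y = 0")
  case True
  then have "L = 0" using assms by simp
  then show ?thesis using assms by simp
next
  case False
  then have Yp: "Y > 0" using assms by simp
  have "L / U \<le> L / Y" using assms Yp by (intro divide_left_mono) auto
  also have "\<dots> \<le> X / Y" using assms Yp by (intro divide_right_mono) auto
  finally show ?thesis .
qed

lemma adjoint_ext:
  fixes K L :: "'a::topological_space \<Rightarrow> 'a measure" and M :: "'a measure"
    and u v :: "'a \<Rightarrow> ennreal" and g :: "'a \<times> 'a \<Rightarrow> ennreal"
  assumes M: "sets M = sets borel"
    and K[measurable]: "K \<in> borel \<rightarrow>\<^sub>M subprob_algebra borel"
    and L[measurable]: "L \<in> borel \<rightarrow>\<^sub>M subprob_algebra borel"
    and u[measurable]: "u \<in> borel_measurable borel" and v[measurable]: "v \<in> borel_measurable borel"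
    and eq: "\<forall>C\<in>sets (borel \<Otimes>\<^sub>M borel).
        (\<integral>\<^sup>+x. u x * (\<integral>\<^sup>+y. indicator C (x,y) \<partial>K x) \<partial>M)
      = (\<integral>\<^sup>+y. v y * (\<integral>\<^sup>+x. indicator C (x,y) \<partial>L y) \<partial>M)"
    and g: "g \<in> borel_measurable (borel \<Otimes>\<^sub>M borel)"
  shows "(\<integral>\<^sup>+x. u x * (\<integral>\<^sup>+y. g (x,y) \<partial>K x) \<partial>M)
      = (\<integral>\<^sup>+y. v y * (\<integral>\<^sup>+x. g (x,y) \<partial>L y) \<partial>M)"
  using g
proof induction
  case (cong f g)
  then show ?case by (simp add: space_pair_measure)
next
  case (set A)
  then show ?case using eq by auto
next
  case (mult w c)
  note w[measurable] = mult(2)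
  have sK: "\<And>x. sets (K x) = sets borel"
    using K by (rule kern_sets)
  have sL: "\<And>x. sets (L x) = sets borel"
    using L by (rule kern_sets)
  have m1: "\<And>x. (\<lambda>y. w (x,y)) \<in> borel_measurable (K x)"
    by (subst measurable_cong_sets[OF sK refl]) measurable
  have m2: "\<And>y. (\<lambda>x. w (x,y)) \<in> borel_measurable (L y)"
    by (subst measurable_cong_sets[OF sL refl]) measurable
  have i1: "(\<lambda>x. \<integral>\<^sup>+y. w (x,y) \<partial>K x) \<in> borel_measurable borel"
    by (rule nn_integral_measurable_subprob_algebra2[where f="\<lambda>x y. w (x,y)"]) measurable
  have i2: "(\<lambda>y. \<integral>\<^sup>+x. w (x,y) \<partial>L y) \<in> borel_measurable borel"
    by (rule nn_integral_measurable_subprob_algebra2[where f="\<lambda>y x. w (x,y)"]) measurable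
  have "(\<integral>\<^sup>+x. u x * (\<integral>\<^sup>+y. c * w (x,y) \<partial>K x) \<partial>M) = (\<integral>\<^sup>+x. c * (u x * (\<integral>\<^sup>+y. w (x,y) \<partial>K x)) \<partial>M)"
    using m1 by (simp add: nn_integral_cmult mult.left_commute)
  also have "\<dots> = c * (\<integral>\<^sup>+x. u x * (\<integral>\<^sup>+y. w (x,y) \<partial>K x) \<partial>M)"
    using i1 by (subst nn_integral_cmult) (auto simp: measurable_cong_sets[OF M refl])
  also have "\<dots> = c * (\<integral>\<^sup>+y. v y * (\<integral>\<^sup>+x. w (x,y) \<partial>L y) \<partial>M)" using mult by simp
  also have "\<dots> = (\<integral>\<^sup>+y. c * (v y * (\<integral>\<^sup>+x. w (x,y) \<partial>L y)) \<partial>M)"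
    using i2 by (subst nn_integral_cmult) (auto simp: measurable_cong_sets[OF M refl])
  also have "\<dots> = (\<integral>\<^sup>+y. v y * (\<integral>\<^sup>+x. c * w (x,y) \<partial>L y) \<partial>M)"
    using m2 by (simp add: nn_integral_cmult mult.left_commute)
  finally show ?case .
next
  case (add w z)
  note w[measurable] = \<open>w \<in> borel_measurable (borel \<Otimes>\<^sub>M borel)\<close>
    and z[measurable] = \<open>z \<in> borel_measurable (borel \<Otimes>\<^sub>M borel)\<close>
  have sK: "\<And>x. sets (K x) = sets borel" using K by (rule kern_sets)
  have sL: "\<And>x. sets (L x) = sets borel" using L by (rule kern_sets)
  have m1: "\<And>x. (\<lambda>y. w (x,y)) \<in> borel_measurable (K x)" "\<And>x. (\<lambda>y. z (x,y)) \<in> borel_measurable (K x)"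
    unfolding measurable_cong_sets[OF sK refl] by measurable
  have m2: "\<And>y. (\<lambda>x. w (x,y)) \<in> borel_measurable (L y)" "\<And>y. (\<lambda>x. z (x,y)) \<in> borel_measurable (L y)"
    unfolding measurable_cong_sets[OF sL refl] by measurable
  have i1: "(\<lambda>x. \<integral>\<^sup>+y. w (x,y) \<partial>K x) \<in> borel_measurable M" "(\<lambda>x. \<integral>\<^sup>+y. z (x,y) \<partial>K x) \<in> borel_measurable M"
    unfolding measurable_cong_sets[OF M refl]
    by (rule nn_integral_measurable_subprob_algebra2[where f="\<lambda>x y. w (x,y)"], measurable,
        rule nn_integral_measurable_subprob_algebra2[where f="\<lambda>x y. z (x,y)"], measurable)
  have i2: "(\<lambda>y. \<integral>\<^sup>+x. w (x,y) \<partial>L y) \<in> borel_measurable M" "(\<lambda>y. \<integral>\<^sup>+x. z (x,y) \<partial>L y) \<in> borel_measurable M"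
    unfolding measurable_cong_sets[OF M refl]
    by (rule nn_integral_measurable_subprob_algebra2[where f="\<lambda>y x. w (x,y)"], measurable,
        rule nn_integral_measurable_subprob_algebra2[where f="\<lambda>y x. z (x,y)"], measurable)
  have um: "u \<in> borel_measurable M" "v \<in> borel_measurable M" unfolding measurable_cong_sets[OF M refl] by auto
  have "(\<integral>\<^sup>+x. u x * (\<integral>\<^sup>+y. z (x,y) + w (x,y) \<partial>K x) \<partial>M)
      = (\<integral>\<^sup>+x. u x * (\<integral>\<^sup>+y. z (x,y) \<partial>K x) + u x * (\<integral>\<^sup>+y. w (x,y) \<partial>K x) \<partial>M)"
    using m1 by (simp add: nn_integral_add distrib_left)
  also have "\<dots> = (\<integral>\<^sup>+x. u x * (\<integral>\<^sup>+y. z (x,y) \<partial>K x) \<partial>M) + (\<integral>\<^sup>+x. u x * (\<integral>\<^sup>+y. w (x,y) \<partial>K x) \<partial>M)"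
    using i1 um by (intro nn_integral_add) auto
  also have "\<dots> = (\<integral>\<^sup>+y. v y * (\<integral>\<^sup>+x. z (x,y) \<partial>L y) \<partial>M) + (\<integral>\<^sup>+y. v y * (\<integral>\<^sup>+x. w (x,y) \<partial>L y) \<partial>M)"
    using add by simp
  also have "\<dots> = (\<integral>\<^sup>+y. v y * (\<integral>\<^sup>+x. z (x,y) \<partial>L y) + v y * (\<integral>\<^sup>+x. w (x,y) \<partial>L y) \<partial>M)"
    using i2 um by (intro nn_integral_add[symmetric]) auto
  also have "\<dots> = (\<integral>\<^sup>+y. v y * (\<integral>\<^sup>+x. z (x,y) + w (x,y) \<partial>L y) \<partial>M)"
    using m2 by (simp add: nn_integral_add distrib_left)
  finally show ?case .
next
  case (seq U)
  note Um[measurable] = seq(1)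
  have sK: "\<And>x. sets (K x) = sets borel" using K by (rule kern_sets)
  have sL: "\<And>x. sets (L x) = sets borel" using L by (rule kern_sets)
  have m1: "\<And>x i. (\<lambda>y. U i (x,y)) \<in> borel_measurable (K x)"
    by (subst measurable_cong_sets[OF sK refl], measurable)+
  have m2: "\<And>y i. (\<lambda>x. U i (x,y)) \<in> borel_measurable (L y)"
    by (subst measurable_cong_sets[OF sL refl], measurable)+
  have i1: "\<And>i. (\<lambda>x. \<integral>\<^sup>+y. U i (x,y) \<partial>K x) \<in> borel_measurable M"
    unfolding measurable_cong_sets[OF M refl]
    by (rule nn_integral_measurable_subprob_algebra2[where f="\<lambda>x y. U i (x,y)" for i], measurable)
  have i2: "\<And>i. (\<lambda>y. \<integral>\<^sup>+x. U i (x,y) \<partial>L y) \<in> borel_measurable M"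
    unfolding measurable_cong_sets[OF M refl]
    by (rule nn_integral_measurable_subprob_algebra2[where f="\<lambda>y x. U i (x,y)" for i], measurable)
  have um: "u \<in> borel_measurable M" "v \<in> borel_measurable M" unfolding measurable_cong_sets[OF M refl] by auto
  have incK: "\<And>x. incseq (\<lambda>i y. U i (x,y))" using \<open>incseq U\<close> by (auto simp: incseq_def le_fun_def)
  have incL: "\<And>y. incseq (\<lambda>i x. U i (x,y))" using \<open>incseq U\<close> by (auto simp: incseq_def le_fun_def)
  have "(\<integral>\<^sup>+x. u x * (\<integral>\<^sup>+y. (SUP i. U i) (x,y) \<partial>K x) \<partial>M)
      = (\<integral>\<^sup>+x. (SUP i. u x * (\<integral>\<^sup>+y. U i (x,y) \<partial>K x)) \<partial>M)"
  proof (rule nn_integral_cong)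
    fix x
    have "(\<integral>\<^sup>+y. (SUP i. U i (x,y)) \<partial>K x) = (SUP i. \<integral>\<^sup>+y. U i (x,y) \<partial>K x)"
      using nn_integral_monotone_convergence_SUP[OF incK m1] by simp
    then show "u x * (\<integral>\<^sup>+y. (SUP i. U i) (x,y) \<partial>K x) = (SUP i. u x * (\<integral>\<^sup>+y. U i (x,y) \<partial>K x))"
      by (simp add: SUP_mult_left_ennreal image_comp)
  qed
  also have "\<dots> = (SUP i. (\<integral>\<^sup>+x. u x * (\<integral>\<^sup>+y. U i (x,y) \<partial>K x) \<partial>M))"
  proof (rule nn_integral_monotone_convergence_SUP)
    show "incseq (\<lambda>i x. u x * (\<integral>\<^sup>+y. U i (x,y) \<partial>K x))"
      using incK unfolding incseq_def le_fun_def
      by (auto intro!: mult_left_mono nn_integral_mono)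
  qed (use i1 um in auto)
  also have "\<dots> = (SUP i. (\<integral>\<^sup>+y. v y * (\<integral>\<^sup>+x. U i (x,y) \<partial>L y) \<partial>M))"
    using seq by simp
  also have "\<dots> = (\<integral>\<^sup>+y. (SUP i. v y * (\<integral>\<^sup>+x. U i (x,y) \<partial>L y)) \<partial>M)"
  proof (rule nn_integral_monotone_convergence_SUP[symmetric])
    show "incseq (\<lambda>i y. v y * (\<integral>\<^sup>+x. U i (x,y) \<partial>L y))"
      using incL unfolding incseq_def le_fun_def
      by (auto intro!: mult_left_mono nn_integral_mono)
  qed (use i2 um in auto)
  also have "\<dots> = (\<integral>\<^sup>+y. v y * (\<integral>\<^sup>+x. (SUP i. U i) (x,y) \<partial>L y) \<partial>M)"
  proof (rule nn_integral_cong)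
    fix y
    have "(\<integral>\<^sup>+x. (SUP i. U i (x,y)) \<partial>L y) = (SUP i. \<integral>\<^sup>+x. U i (x,y) \<partial>L y)"
      using nn_integral_monotone_convergence_SUP[OF incL m2] by simp
    then show "(SUP i. v y * (\<integral>\<^sup>+x. U i (x,y) \<partial>L y)) = v y * (\<integral>\<^sup>+x. (SUP i. U i) (x,y) \<partial>L y)"
      by (simp add: SUP_mult_left_ennreal image_comp)
  qed
  finally show ?case .
qed

theorem mainTheorem6:
  fixes Lam :: "'a::metric_space measure"
    and T :: "real set"
    and P :: "real \<Rightarrow> 'a \<Rightarrow> 'a measure"
    and qsd :: "'a measure"
    and f :: "'a \<Rightarrow> real"
    and psi :: "'a \<Rightarrow> real"
    and t0 a c0' :: real
    and Pt :: "'a \<Rightarrow> 'a measure"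
    and nu' :: "'a measure"
  assumes Lam_sets: "sets Lam = sets borel"
    and Lam_sigma: "sigma_finite_measure Lam"
    and Lam_support: "\<And>U. open U \<Longrightarrow> U \<noteq> {} \<Longrightarrow> emeasure Lam U > 0"
    and T_time: "T = \<nat> \<or> T = {0..}"
    and P_kernel: "\<And>t. t \<in> T \<Longrightarrow> submarkov_kernel (P t)"
    and P_semigroup: "\<And>s t x A. s \<in> T \<Longrightarrow> t \<in> T \<Longrightarrow> A \<in> sets borel \<Longrightarrow>
        emeasure (P (s + t) x) A = (\<integral>\<^sup>+y. emeasure (P t y) A \<partial>P s x)"
    and pi_prob: "prob_space qsd"
    and f_meas: "f \<in> borel_measurable borel"
    and f_nonneg: "\<And>x. f x \<ge> 0"
    and pi_dens: "qsd = density Lam (\<lambda>x. ennreal (f x))"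
    and f_Linf: "esssup Lam (\<lambda>x. ereal (f x)) < \<infinity>"
    and QSD: "\<And>t. t \<in> T \<Longrightarrow>
        (\<integral>\<^sup>+x. emeasure (P t x) UNIV \<partial>qsd) > 0 \<and>
        (\<forall>A\<in>sets borel. (\<integral>\<^sup>+x. emeasure (P t x) A \<partial>qsd)
                          = (\<integral>\<^sup>+x. emeasure (P t x) UNIV \<partial>qsd) * emeasure qsd A)"
    and psi_meas: "psi \<in> borel_measurable borel"
    and psi_bdd: "\<exists>M. \<forall>x. \<bar>psi x\<bar> \<le> M"
    and psi_inf: "\<exists>c>0. \<forall>x. psi x \<ge> c"
    and t0_pos: "t0 > 0" and t0_T: "t0 \<in> T"
    and a_pos: "a > 0"
    and Pt_kernel: "submarkov_kernel Pt"
    and adjoint: "\<forall>C\<in>sets (borel \<Otimes>\<^sub>M borel).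
        (\<integral>\<^sup>+x. ennreal (psi x) * (\<integral>\<^sup>+y. indicator C (x,y) \<partial>P t0 x) \<partial>Lam)
      = (\<integral>\<^sup>+y. ennreal (a * psi y) * (\<integral>\<^sup>+x. indicator C (x,y) \<partial>Pt y) \<partial>Lam)"
    and Pt_pos: "AE y in Lam. emeasure (Pt y) UNIV > 0"
    and c0'_pos: "c0' > 0"
    and nu'_prob: "prob_space nu'"
    and nu'_sets: "sets nu' = sets borel"
    and nu'_not_sing: "\<not> mutually_singular nu' qsd"
    and minor: "AE y in Lam. \<forall>A\<in>sets borel.
        measure (Pt y) A / measure (Pt y) UNIV \<ge> c0' * measure nu' A"
  shows "absolutely_continuous Lam nu'
       \<and> (\<integral>x. f x \<partial>nu') > 0
       \<and> (let nf = (\<integral>x. f x \<partial>nu');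
              c0 = c0' * nf /
                   ((SUP x. \<bar>psi x\<bar>) * (SUP x. \<bar>1 / psi x\<bar>)
                    * real_of_ereal (esssup Lam (\<lambda>x. ereal (f x))));
              nu = density nu' (\<lambda>x. ennreal (f x / nf))
          in 0 < c0 \<and> c0 \<le> 1 \<and> prob_space nu \<and>
             reverse_dobrushin (P t0) qsd c0 nu)"
proof -
  have spL: "space Lam = UNIV" using sets_eq_imp_space_eq[OF Lam_sets] by simp
  have mL: "\<And>N. measurable Lam N = measurable borel N" by (rule measurable_cong_sets[OF Lam_sets refl])
  have sPt: "\<And>y. sets (Pt y) = sets borel" using Pt_kernel unfolding submarkov_kernel_def by (rule kern_sets)
  have spPt: "\<And>y. space (Pt y) = UNIV" using sets_eq_imp_space_eq[OF sPt] by simp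
  have subPt: "\<And>y. subprob_space (Pt y)" using Pt_kernel unfolding submarkov_kernel_def by (rule kern_subprob)
  have Pk: "P t0 \<in> borel \<rightarrow>\<^sub>M subprob_algebra borel" using P_kernel[OF t0_T] unfolding submarkov_kernel_def .
  have Ptk: "Pt \<in> borel \<rightarrow>\<^sub>M subprob_algebra borel" using Pt_kernel unfolding submarkov_kernel_def .
  have sP: "\<And>x. sets (P t0 x) = sets borel" using Pk by (rule kern_sets)
  have spP: "\<And>x. space (P t0 x) = UNIV" using sets_eq_imp_space_eq[OF sP] by simp
  have subP: "\<And>x. subprob_space (P t0 x)" using Pk by (rule kern_subprob)
  have sq: "sets qsd = sets borel" using pi_dens Lam_sets by simp
  have spq: "space qsd = UNIV" using sets_eq_imp_space_eq[OF sq] by simp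
  have snu': "space nu' = UNIV" using sets_eq_imp_space_eq[OF nu'_sets] by simp
  interpret L: sigma_finite_measure Lam by (rule Lam_sigma)
  interpret Q: prob_space qsd by (rule pi_prob)
  interpret N': prob_space nu' by (rule nu'_prob)
  have LamU: "emeasure Lam UNIV > 0" using Lam_support[of UNIV] by simp
  have exAE: "\<exists>y. Q y" if "AE y in Lam. Q y" for Q
  proof (rule ccontr)
    assume "\<not> (\<exists>y. Q y)"
    then have "AE y in Lam. False" using that by (auto elim: eventually_mono)
    then have "UNIV \<in> null_sets Lam" using AE_iff_null_sets[of UNIV Lam] Lam_sets by simp
    then show False using LamU by auto
  qed
  obtain cpsi where cpsi: "cpsi > 0" "\<And>x. psi x \<ge> cpsi" using psi_inf by auto
  obtain Bpsi where Bpsi: "\<And>x. \<bar>psi x\<bar> \<le> Bpsi" using psi_bdd by auto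
  have psi_pos: "\<And>x. psi x > 0" using cpsi by (metis less_le_trans)
  note [measurable] = f_meas psi_meas
  have nullPt: "AE y in Lam. emeasure (Pt y) N = 0" if N: "N \<in> null_sets Lam" for N
  proof -
    have Nb: "N \<in> sets borel" using N Lam_sets by auto
    have "N \<times> UNIV \<in> sets (borel \<Otimes>\<^sub>M borel)" using Nb by auto
    from adjoint[rule_format, OF this]
    have eq: "(\<integral>\<^sup>+x. ennreal (psi x) * (\<integral>\<^sup>+y. indicator N x \<partial>P t0 x) \<partial>Lam)
      = (\<integral>\<^sup>+y. ennreal (a * psi y) * (\<integral>\<^sup>+x. indicator N x \<partial>Pt y) \<partial>Lam)"
      by (simp add: indicator_times)
    have "(\<integral>\<^sup>+x. ennreal (psi x) * (\<integral>\<^sup>+y. indicator N x \<partial>P t0 x) \<partial>Lam) = 0"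
    proof -
      have "AE x in Lam. x \<notin> N" using N by (rule AE_not_in)
      then have "(\<integral>\<^sup>+x. ennreal (psi x) * (\<integral>\<^sup>+y. indicator N x \<partial>P t0 x) \<partial>Lam) = (\<integral>\<^sup>+x. 0 \<partial>Lam)"
        by (intro nn_integral_cong_AE) (auto elim!: eventually_mono)
      then show ?thesis by simp
    qed
    with eq have "(\<integral>\<^sup>+y. ennreal (a * psi y) * emeasure (Pt y) N \<partial>Lam) = 0"
      using Nb sPt by (simp add: nn_integral_indicator)
    moreover have "(\<lambda>y. ennreal (a * psi y) * emeasure (Pt y) N) \<in> borel_measurable Lam"
      unfolding mL using Ptk Nb by measurable
    ultimately have "AE y in Lam. ennreal (a * psi y) * emeasure (Pt y) N = 0"
      by (simp add: nn_integral_0_iff_AE)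
    moreover have "\<And>y. ennreal (a * psi y) \<noteq> 0" using psi_pos a_pos by (simp add: ennreal_eq_0_iff not_le)
    ultimately show ?thesis by (auto elim!: eventually_mono)
  qed
  have ac: "absolutely_continuous Lam nu'"
    unfolding absolutely_continuous_def
  proof
    fix N assume N: "N \<in> null_sets Lam"
    have Nb: "N \<in> sets borel" using N Lam_sets by auto
    from exAE[OF AE_conjI[OF nullPt[OF N] minor]] obtain y where
      y: "emeasure (Pt y) N = 0" "\<forall>A\<in>sets borel. measure (Pt y) A / measure (Pt y) UNIV \<ge> c0' * measure nu' A"
      by auto
    have "measure (Pt y) N = 0" using y(1) by (simp add: measure_def)
    moreover have "c0' * measure nu' N \<le> measure (Pt y) N / measure (Pt y) UNIV"
      using bspec[OF y(2) Nb] .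
    ultimately have "c0' * measure nu' N \<le> 0" by simp
    then have "measure nu' N = 0" using c0'_pos by (simp add: mult_le_0_iff measure_nonneg antisym)
    then show "N \<in> null_sets nu'" using Nb nu'_sets by (simp add: N'.emeasure_eq_measure null_sets_def)
  qed
  have c0'_le: "c0' \<le> 1"
  proof -
    from exAE[OF AE_conjI[OF Pt_pos minor]] obtain y where
      y: "emeasure (Pt y) UNIV > 0" "\<forall>A\<in>sets borel. measure (Pt y) A / measure (Pt y) UNIV \<ge> c0' * measure nu' A"
      by auto
    have le1: "emeasure (Pt y) UNIV \<le> 1" using subprob_space.emeasure_space_le_1[OF subPt[of y]] spPt by simp
    have "emeasure (Pt y) UNIV < top" by (rule order.strict_trans1[OF le1 ennreal_one_less_top])
    then have "measure (Pt y) UNIV > 0" using y(1) by (simp add: measure_def enn2real_positive_iff)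
    moreover have "measure nu' UNIV = 1" using N'.prob_space snu' by simp
    moreover have "c0' * measure nu' UNIV \<le> measure (Pt y) UNIV / measure (Pt y) UNIV"
      using bspec[OF y(2), of UNIV] by simp
    ultimately show ?thesis by simp
  qed
  define E where "E = esssup Lam (\<lambda>x. ereal (f x))"
  define Mf where "Mf = real_of_ereal E"
  have AE_E: "AE x in Lam. ereal (f x) \<le> E" unfolding E_def by (rule esssup_AE)
  have E_nn: "E \<ge> 0" using exAE[OF AE_E] f_nonneg by (meson ereal_less_eq(5) order_trans)
  have E_fin: "E < \<infinity>" using f_Linf E_def by simp
  have E_eq: "E = ereal Mf" unfolding Mf_def using E_nn E_fin by (cases E) auto
  have AE_M: "AE x in Lam. f x \<le> Mf" using AE_E E_eq by auto
  have Mf_pos: "Mf > 0"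
  proof (rule ccontr)
    assume "\<not> Mf > 0"
    then have "AE x in Lam. f x = 0" using AE_M f_nonneg by (auto elim!: eventually_mono intro: antisym)
    then have "(\<integral>\<^sup>+x. ennreal (f x) \<partial>Lam) = (\<integral>\<^sup>+x. 0 \<partial>Lam)"
      by (intro nn_integral_cong_AE) (auto elim!: eventually_mono)
    then have "emeasure qsd UNIV = 0" using pi_dens
      by (simp add: emeasure_density mL spL[symmetric] nn_integral_density)
    then show False using Q.emeasure_space_1 spq by simp
  qed
  define nf where "nf = (\<integral>x. f x \<partial>nu')"
  have AE_M': "AE x in nu'. f x \<le> Mf" by (rule absolutely_continuous_AE[OF _ ac AE_M]) (simp add: nu'_sets Lam_sets)
  have int_f: "integrable nu' f"
  proof (rule N'.integrable_const_bound[where B=Mf])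
    show "AE x in nu'. norm (f x) \<le> Mf" using AE_M' f_nonneg by (auto elim!: eventually_mono)
    show "f \<in> borel_measurable nu'" unfolding measurable_cong_sets[OF nu'_sets refl] by (rule f_meas)
  qed
  have nf_nn: "nf \<ge> 0" unfolding nf_def by (rule Bochner_Integration.integral_nonneg) (rule f_nonneg)
  have nf_le: "nf \<le> Mf"
  proof -
    have "nf \<le> (\<integral>x. Mf \<partial>nu')" unfolding nf_def by (rule integral_mono_AE[OF int_f _ AE_M']) simp
    then show ?thesis using N'.prob_space snu' by simp
  qed
  have nf_pos: "nf > 0"
  proof (rule ccontr)
    assume "\<not> nf > 0"
    then have "nf = 0" using nf_nn by simp
    then have ae00: "AE x in nu'. f x = 0" unfolding nf_def using integral_nonneg_eq_0_iff_AE[OF int_f] f_nonneg by simp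
    have fpos_s: "{x. 0 < f x} \<in> sets nu'" using nu'_sets by simp
    from ae00 have ae0: "AE x in nu'. \<not> 0 < f x" by (auto elim!: eventually_mono)
    have "emeasure nu' {x. 0 < f x} = 0"
      using AE_iff_measurable[OF fpos_s, of "\<lambda>x. \<not> 0 < f x"] ae0 snu' by simp
    moreover have "emeasure qsd (space qsd - {x. 0 < f x}) = 0"
    proof -
      have "emeasure qsd (space qsd - {x. 0 < f x}) = (\<integral>\<^sup>+x\<in>{x. \<not> 0 < f x}. ennreal (f x) \<partial>Lam)"
      proof -
        have fm: "(\<lambda>x. ennreal (f x)) \<in> borel_measurable Lam" unfolding mL by simp
        have ss: "{x. \<not> 0 < f x} \<in> sets Lam" using Lam_sets by simp
        have "space qsd - {x. 0 < f x} = {x. \<not> 0 < f x}" using spq by auto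
        then show ?thesis using pi_dens emeasure_density[OF fm ss] by simp
      qed
      also have "\<dots> = (\<integral>\<^sup>+x. 0 \<partial>Lam)"
        by (intro nn_integral_cong) (auto simp: indicator_def f_nonneg not_less antisym)
      finally show ?thesis by simp
    qed
    ultimately have "mutually_singular nu' qsd" unfolding mutually_singular_def using fpos_s by blast
    then show False using nu'_not_sing by simp
  qed
  define S1 where "S1 = (SUP x. \<bar>psi x\<bar>)"
  define S2 where "S2 = (SUP x. \<bar>1 / psi x\<bar>)"
  have bdd1: "bdd_above (range (\<lambda>x. \<bar>psi x\<bar>))" using Bpsi by (auto intro!: bdd_aboveI)
  have bdd2: "bdd_above (range (\<lambda>x. \<bar>1 / psi x\<bar>))"
  proof (rule bdd_aboveI[where M="1/cpsi"])
    fix r assume "r \<in> range (\<lambda>x. \<bar>1 / psi x\<bar>)"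
    then obtain x where "r = \<bar>1 / psi x\<bar>" by auto
    then show "r \<le> 1/cpsi" using cpsi psi_pos[of x] by (simp add: frac_le)
  qed
  have S1u: "\<And>x. psi x \<le> S1" unfolding S1_def by (rule order_trans[OF abs_ge_self cSUP_upper[OF UNIV_I bdd1]])
  have S2u: "\<And>x. 1 / psi x \<le> S2" unfolding S2_def by (rule order_trans[OF abs_ge_self cSUP_upper[OF UNIV_I bdd2]])
  have S1p: "S1 > 0" using S1u[of undefined] psi_pos[of undefined] by linarith
  have S2p: "S2 > 0" using S2u[of undefined] psi_pos[of undefined] by (meson less_le_trans divide_pos_pos zero_less_one)
  have S12: "S1 * S2 \<ge> 1"
  proof -
    have "1 = psi undefined * (1 / psi undefined)" using psi_pos[of undefined] by simp
    also have "\<dots> \<le> S1 * S2" using S1u S2u psi_pos[of undefined] S1p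
      by (intro mult_mono) auto
    finally show ?thesis .
  qed
  define c0 where "c0 = c0' * nf / (S1 * S2 * Mf)"
  have c0_pos: "c0 > 0" unfolding c0_def using c0'_pos nf_pos S1p S2p Mf_pos by simp
  have c0_le: "c0 \<le> 1"
  proof -
    have "c0' * nf \<le> 1 * Mf" using c0'_le nf_le c0'_pos nf_nn by (intro mult_mono) auto
    also have "\<dots> \<le> S1 * S2 * Mf" using S12 Mf_pos by (intro mult_right_mono) auto
    finally show ?thesis unfolding c0_def using S1p S2p Mf_pos by simp
  qed
  define nu where "nu = density nu' (\<lambda>x. ennreal (f x / nf))"
  have nu_prob: "prob_space nu"
  proof (rule prob_spaceI)
    have fm': "(\<lambda>x. ennreal (f x / nf)) \<in> borel_measurable nu'"
      unfolding measurable_cong_sets[OF nu'_sets refl] by simp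
    have "emeasure nu (space nu) = emeasure nu UNIV" unfolding nu_def using snu' by simp
    also have "\<dots> = (\<integral>\<^sup>+x\<in>UNIV. ennreal (f x / nf) \<partial>nu')"
      unfolding nu_def by (rule emeasure_density[OF fm']) (simp add: nu'_sets)
    also have "\<dots> = (\<integral>\<^sup>+x. ennreal (f x / nf) \<partial>nu')" by simp
    also have "\<dots> = ennreal (\<integral>x. f x / nf \<partial>nu')"
      by (rule nn_integral_eq_integral) (use int_f f_nonneg nf_pos in auto)
    also have "\<dots> = 1" using nf_pos unfolding nf_def by simp
    finally show "emeasure nu (space nu) = 1" .
  qed
  have RD: "reverse_dobrushin (P t0) qsd c0 nu"
  proof -
    note Pkm[measurable] = Pk and Ptkm[measurable] = Ptk
    define lam where "lam = (\<integral>\<^sup>+x. emeasure (P t0 x) UNIV \<partial>qsd)"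
    define G where "G = (\<lambda>y. \<integral>\<^sup>+x. ennreal (f x / psi x) \<partial>Pt y)"
    define Good where "Good = (\<lambda>y. 0 < f y \<and> ennreal (a * psi y) * G y \<le> ennreal (f y))"
    define R where "R = (\<lambda>y. if Good y then density (Pt y) (\<lambda>x. ennreal (a * psi y / f y) * ennreal (f x / psi x)) else null_measure borel)"
    have fLm: "(\<lambda>x. ennreal (f x)) \<in> borel_measurable Lam" unfolding mL by simp
    have umeas: "(\<lambda>x. ennreal (psi x)) \<in> borel_measurable borel" by measurable
    have vmeas: "(\<lambda>y. ennreal (a * psi y)) \<in> borel_measurable borel" by measurable
    have mG[measurable]: "G \<in> borel_measurable borel"
      unfolding G_def by (rule nn_integral_measurable_subprob_algebra2[where f="\<lambda>y x. ennreal (f x / psi x)", OF _ Ptk]) measurable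
    have mGood[measurable]: "Measurable.pred borel Good" unfolding Good_def by measurable
    have lam_le: "lam \<le> 1"
    proof -
      have "lam \<le> (\<integral>\<^sup>+x. 1 \<partial>qsd)" unfolding lam_def
        by (intro nn_integral_mono) (use subprob_space.emeasure_space_le_1[OF subP] spP in auto)
      also have "\<dots> = 1" using Q.emeasure_space_1 spq by simp
      finally show ?thesis .
    qed
    have QSD0: "\<And>A. A \<in> sets borel \<Longrightarrow> (\<integral>\<^sup>+x. emeasure (P t0 x) A \<partial>qsd) = lam * emeasure qsd A"
      using QSD[OF t0_T] unfolding lam_def by blast
    have eqB: "AE y in Lam. ennreal (a * psi y) * G y = lam * ennreal (f y)"
    proof (rule L.density_unique2)
      show "(\<lambda>y. ennreal (a * psi y) * G y) \<in> borel_measurable Lam" unfolding mL by measurable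
      show "(\<lambda>y. lam * ennreal (f y)) \<in> borel_measurable Lam" unfolding mL by measurable
      fix A assume A: "A \<in> sets Lam"
      then have Ab[measurable]: "A \<in> sets borel" using Lam_sets by simp
      have gm: "(\<lambda>(x,y). ennreal (f x / psi x) * indicator A y) \<in> borel_measurable (borel \<Otimes>\<^sub>M borel)"
        by measurable
      have ext: "(\<integral>\<^sup>+x. ennreal (psi x) * (\<integral>\<^sup>+y. ennreal (f x / psi x) * indicator A y \<partial>P t0 x) \<partial>Lam)
          = (\<integral>\<^sup>+y. ennreal (a * psi y) * (\<integral>\<^sup>+x. ennreal (f x / psi x) * indicator A y \<partial>Pt y) \<partial>Lam)"
        using adjoint_ext[where u="\<lambda>x. ennreal (psi x)" and v="\<lambda>y. ennreal (a * psi y)", OF Lam_sets Pk Ptk umeas vmeas adjoint gm] by simp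
      have "(\<integral>\<^sup>+y\<in>A. ennreal (a * psi y) * G y \<partial>Lam) = (\<integral>\<^sup>+y. ennreal (a * psi y) * (\<integral>\<^sup>+x. ennreal (f x / psi x) * indicator A y \<partial>Pt y) \<partial>Lam)"
      proof (rule nn_integral_cong)
        fix y
        have "(\<integral>\<^sup>+x. ennreal (f x / psi x) * indicator A y \<partial>Pt y) = G y * indicator A y"
          unfolding G_def by (rule nn_integral_multc) (simp add: measurable_cong_sets[OF sPt refl])
        then show "ennreal (a * psi y) * G y * indicator A y = ennreal (a * psi y) * (\<integral>\<^sup>+x. ennreal (f x / psi x) * indicator A y \<partial>Pt y)"
          by (simp add: mult.assoc)
      qed
      also have "\<dots> = (\<integral>\<^sup>+x. ennreal (psi x) * (\<integral>\<^sup>+y. ennreal (f x / psi x) * indicator A y \<partial>P t0 x) \<partial>Lam)"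
        using ext by simp
      also have "\<dots> = (\<integral>\<^sup>+x. ennreal (f x) * emeasure (P t0 x) A \<partial>Lam)"
      proof (rule nn_integral_cong)
        fix x
        have "(\<integral>\<^sup>+y. ennreal (f x / psi x) * indicator A y \<partial>P t0 x) = ennreal (f x / psi x) * emeasure (P t0 x) A"
          by (rule nn_integral_cmult_indicator) (simp add: sP)
        moreover have "ennreal (psi x) * ennreal (f x / psi x) = ennreal (f x)"
          using psi_pos[of x] f_nonneg[of x] by (simp add: ennreal_mult''[symmetric])
        ultimately show "ennreal (psi x) * (\<integral>\<^sup>+y. ennreal (f x / psi x) * indicator A y \<partial>P t0 x) = ennreal (f x) * emeasure (P t0 x) A"
          by (simp add: mult.assoc[symmetric])
      qed
      also have "\<dots> = (\<integral>\<^sup>+x. emeasure (P t0 x) A \<partial>qsd)"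
      proof -
        have "(\<lambda>x. emeasure (P t0 x) A) \<in> borel_measurable Lam" unfolding mL by measurable
        then show ?thesis unfolding pi_dens by (rule nn_integral_density[OF fLm, symmetric])
      qed
      also have "\<dots> = lam * emeasure qsd A" using QSD0[OF Ab] .
      also have "\<dots> = lam * (\<integral>\<^sup>+y\<in>A. ennreal (f y) \<partial>Lam)"
        unfolding pi_dens using emeasure_density[OF fLm A] by simp
      also have "\<dots> = (\<integral>\<^sup>+y\<in>A. lam * ennreal (f y) \<partial>Lam)"
      proof -
        have "(\<lambda>y. ennreal (f y) * indicator A y) \<in> borel_measurable Lam" unfolding mL by measurable
        then show ?thesis by (simp add: nn_integral_cmult[symmetric] mult.assoc)
      qed
      finally show "(\<integral>\<^sup>+y\<in>A. ennreal (a * psi y) * G y \<partial>Lam) = (\<integral>\<^sup>+y\<in>A. lam * ennreal (f y) \<partial>Lam)" .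
    qed
    have aeGood: "AE y in Lam. 0 < f y \<longrightarrow> Good y"
      using eqB
    proof (rule eventually_mono)
      fix y assume e: "ennreal (a * psi y) * G y = lam * ennreal (f y)"
      have "lam * ennreal (f y) \<le> 1 * ennreal (f y)" by (rule mult_right_mono[OF lam_le]) simp
      then show "0 < f y \<longrightarrow> Good y" unfolding Good_def using e by simp
    qed
    have aeZero: "AE y in Lam. f y = 0 \<longrightarrow> ennreal (a * psi y) * G y = 0"
      using eqB by (rule eventually_mono) simp
    have sR: "\<And>y. sets (R y) = sets borel" unfolding R_def using sPt by simp
    have emR: "emeasure (R y) A = (if Good y then ennreal (a * psi y / f y) * (\<integral>\<^sup>+x. ennreal (f x / psi x) * indicator A x \<partial>Pt y) else 0)"
      if A[measurable]: "A \<in> sets borel" for y A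
    proof (cases "Good y")
      case True
      have dm: "(\<lambda>x. ennreal (a * psi y / f y) * ennreal (f x / psi x)) \<in> borel_measurable (Pt y)"
        unfolding measurable_cong_sets[OF sPt refl] by measurable
      have "emeasure (R y) A = (\<integral>\<^sup>+x. ennreal (a * psi y / f y) * (ennreal (f x / psi x) * indicator A x) \<partial>Pt y)"
        using True emeasure_density[OF dm, of A] A sPt by (simp add: R_def mult.assoc)
      also have "\<dots> = ennreal (a * psi y / f y) * (\<integral>\<^sup>+x. ennreal (f x / psi x) * indicator A x \<partial>Pt y)"
        by (rule nn_integral_cmult) (unfold measurable_cong_sets[OF sPt refl], measurable)
      finally show ?thesis using True by simp
    qed (simp add: R_def)
    have Rk: "R \<in> borel \<rightarrow>\<^sub>M subprob_algebra borel"
    proof (rule measurable_subprob_algebra)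
      fix y
      show "sets (R y) = sets borel" by (rule sR)
      have spR: "space (R y) = UNIV" using sets_eq_imp_space_eq[OF sR[of y]] by simp
      show "subprob_space (R y)"
      proof (cases "Good y")
        case True
        have "emeasure (R y) (space (R y)) = ennreal (a * psi y / f y) * G y"
          using emR[of UNIV y] spR True unfolding G_def by simp
        also have "\<dots> \<le> 1"
        proof -
          have fp: "0 < f y" using True Good_def by simp
          have "ennreal (f y) * (ennreal (a * psi y / f y) * G y) = ennreal (a * psi y) * G y"
            using fp psi_pos[of y] a_pos by (simp add: mult.assoc[symmetric] ennreal_mult''[symmetric])
          also have "\<dots> \<le> ennreal (f y) * 1" using True unfolding Good_def by simp
          finally show ?thesis using fp by (subst (asm) ennreal_mult_le_mult_iff) auto
        qed
        finally show ?thesis by (intro subprob_spaceI) (simp_all add: spR)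
      next
        case False
        then show ?thesis by (simp add: R_def subprob_space_null_measure)
      qed
    next
      fix A :: "'a set" assume A[measurable]: "A \<in> sets borel"
      have "(\<lambda>y. \<integral>\<^sup>+x. ennreal (f x / psi x) * indicator A x \<partial>Pt y) \<in> borel_measurable borel"
        by (rule nn_integral_measurable_subprob_algebra2[where f="\<lambda>y x. ennreal (f x / psi x) * indicator A x", OF _ Ptk]) measurable
      then have "(\<lambda>y. if Good y then ennreal (a * psi y / f y) * (\<integral>\<^sup>+x. ennreal (f x / psi x) * indicator A x \<partial>Pt y) else 0) \<in> borel_measurable borel"
        by measurable
      then show "(\<lambda>y. emeasure (R y) A) \<in> borel_measurable borel" using emR[OF A] by simp
    qed
    show ?thesis unfolding reverse_dobrushin_def
    proof (intro exI conjI ballI)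
      show "submarkov_kernel R" unfolding submarkov_kernel_def by (rule Rk)
    next
      fix C :: "('a \<times> 'a) set" assume C[measurable]: "C \<in> sets (borel \<Otimes>\<^sub>M borel)"
      show "(\<integral>\<^sup>+x. (\<integral>\<^sup>+y. indicator C (x,y) \<partial>P t0 x) \<partial>qsd) = (\<integral>\<^sup>+y. (\<integral>\<^sup>+x. indicator C (x,y) \<partial>R y) \<partial>qsd)"
      proof -
      have mC1: "(\<lambda>x. \<integral>\<^sup>+y. indicator C (x,y) \<partial>P t0 x) \<in> borel_measurable borel"
        by (rule nn_integral_measurable_subprob_algebra2[where f="\<lambda>x y. indicator C (x,y)", OF _ Pk]) measurable
      have mC2: "(\<lambda>y. \<integral>\<^sup>+x. indicator C (x,y) \<partial>R y) \<in> borel_measurable borel"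
        by (rule nn_integral_measurable_subprob_algebra2[where f="\<lambda>y x. indicator C (x,y)", OF _ Rk]) measurable
      have gmC: "(\<lambda>(x,y). ennreal (f x / psi x) * indicator C (x,y)) \<in> borel_measurable (borel \<Otimes>\<^sub>M borel)"
        by measurable
      have "(\<integral>\<^sup>+x. (\<integral>\<^sup>+y. indicator C (x,y) \<partial>P t0 x) \<partial>qsd) = (\<integral>\<^sup>+x. ennreal (f x) * (\<integral>\<^sup>+y. indicator C (x,y) \<partial>P t0 x) \<partial>Lam)"
        unfolding pi_dens by (rule nn_integral_density[OF fLm]) (simp add: mL mC1)
      also have "\<dots> = (\<integral>\<^sup>+x. ennreal (psi x) * (\<integral>\<^sup>+y. ennreal (f x / psi x) * indicator C (x,y) \<partial>P t0 x) \<partial>Lam)"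
      proof (rule nn_integral_cong)
        fix x
        have "(\<integral>\<^sup>+y. ennreal (f x / psi x) * indicator C (x,y) \<partial>P t0 x) = ennreal (f x / psi x) * (\<integral>\<^sup>+y. indicator C (x,y) \<partial>P t0 x)"
          by (rule nn_integral_cmult) (unfold measurable_cong_sets[OF sP refl], measurable)
        moreover have "ennreal (psi x) * ennreal (f x / psi x) = ennreal (f x)"
          using psi_pos[of x] f_nonneg[of x] by (simp add: ennreal_mult''[symmetric])
        ultimately show "ennreal (f x) * (\<integral>\<^sup>+y. indicator C (x,y) \<partial>P t0 x) = ennreal (psi x) * (\<integral>\<^sup>+y. ennreal (f x / psi x) * indicator C (x,y) \<partial>P t0 x)"
          by (simp add: mult.assoc[symmetric])
      qed
      also have "\<dots> = (\<integral>\<^sup>+y. ennreal (a * psi y) * (\<integral>\<^sup>+x. ennreal (f x / psi x) * indicator C (x,y) \<partial>Pt y) \<partial>Lam)"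
        using adjoint_ext[where u="\<lambda>x. ennreal (psi x)" and v="\<lambda>y. ennreal (a * psi y)", OF Lam_sets Pk Ptk umeas vmeas adjoint gmC] by simp
      also have "\<dots> = (\<integral>\<^sup>+y. ennreal (f y) * (\<integral>\<^sup>+x. indicator C (x,y) \<partial>R y) \<partial>Lam)"
      proof (rule nn_integral_cong_AE)
        show "AE y in Lam. ennreal (a * psi y) * (\<integral>\<^sup>+x. ennreal (f x / psi x) * indicator C (x,y) \<partial>Pt y) = ennreal (f y) * (\<integral>\<^sup>+x. indicator C (x,y) \<partial>R y)"
          using aeGood aeZero
        proof eventually_elim
          fix y assume h: "0 < f y \<longrightarrow> Good y" "f y = 0 \<longrightarrow> ennreal (a * psi y) * G y = 0"
          have mi: "(\<lambda>x. ennreal (f x / psi x) * indicator C (x,y)) \<in> borel_measurable (Pt y)"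
            unfolding measurable_cong_sets[OF sPt refl] by measurable
          show "ennreal (a * psi y) * (\<integral>\<^sup>+x. ennreal (f x / psi x) * indicator C (x,y) \<partial>Pt y) = ennreal (f y) * (\<integral>\<^sup>+x. indicator C (x,y) \<partial>R y)"
          proof (cases "Good y")
            case True
            then have fp: "0 < f y" unfolding Good_def by simp
            have dm: "(\<lambda>x. ennreal (a * psi y / f y) * ennreal (f x / psi x)) \<in> borel_measurable (Pt y)"
              unfolding measurable_cong_sets[OF sPt refl] by measurable
            have im: "(\<lambda>x. indicator C (x,y) :: ennreal) \<in> borel_measurable (Pt y)"
              unfolding measurable_cong_sets[OF sPt refl] by measurable
            have "(\<integral>\<^sup>+x. indicator C (x,y) \<partial>R y) = (\<integral>\<^sup>+x. ennreal (a * psi y / f y) * (ennreal (f x / psi x) * indicator C (x,y)) \<partial>Pt y)"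
              using True nn_integral_density[OF dm im] unfolding R_def by (simp add: mult.assoc)
            also have "\<dots> = ennreal (a * psi y / f y) * (\<integral>\<^sup>+x. ennreal (f x / psi x) * indicator C (x,y) \<partial>Pt y)"
              by (rule nn_integral_cmult[OF mi])
            finally have e: "(\<integral>\<^sup>+x. indicator C (x,y) \<partial>R y) = ennreal (a * psi y / f y) * (\<integral>\<^sup>+x. ennreal (f x / psi x) * indicator C (x,y) \<partial>Pt y)" .
            have "ennreal (f y) * ennreal (a * psi y / f y) = ennreal (a * psi y)"
              using fp psi_pos[of y] a_pos by (simp add: ennreal_mult''[symmetric])
            then show ?thesis unfolding e by (simp add: mult.assoc[symmetric])
          next
            case False
            then have f0: "f y = 0" using h f_nonneg[of y] by (auto simp: less_le)
            have "ennreal (a * psi y) * (\<integral>\<^sup>+x. ennreal (f x / psi x) * indicator C (x,y) \<partial>Pt y) \<le> ennreal (a * psi y) * G y"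
              unfolding G_def by (intro mult_left_mono nn_integral_mono) (auto simp: indicator_def)
            then show ?thesis using h f0 by simp
          qed
        qed
      qed
      also have "\<dots> = (\<integral>\<^sup>+y. (\<integral>\<^sup>+x. indicator C (x,y) \<partial>R y) \<partial>qsd)"
        unfolding pi_dens by (rule nn_integral_density[OF fLm, symmetric]) (simp add: mL mC2)
      finally show ?thesis .
      qed
    next
      show "AE y in qsd. \<forall>A\<in>sets borel. measure (R y) A / measure (R y) UNIV \<ge> c0 * measure nu A"
      proof -
      define N0 where "N0 = {x. Mf < f x}"
      have N0s: "N0 \<in> sets Lam" unfolding N0_def using Lam_sets by simp
      have N0null: "N0 \<in> null_sets Lam"
      proof -
        have "emeasure Lam N0 = 0"
          using AE_iff_measurable[OF N0s, of "\<lambda>x. f x \<le> Mf"] AE_M spL unfolding N0_def by (simp add: not_le)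
        then show ?thesis using N0s by (rule null_setsI)
      qed
      have aeAll: "AE y in Lam. 0 < ennreal (f y) \<longrightarrow> (\<forall>A\<in>sets borel. measure (R y) A / measure (R y) UNIV \<ge> c0 * measure nu A)"
        using aeGood minor Pt_pos nullPt[OF N0null]
      proof eventually_elim
        fix y assume h: "0 < f y \<longrightarrow> Good y" "\<forall>A\<in>sets borel. c0' * measure nu' A \<le> measure (Pt y) A / measure (Pt y) UNIV"
          "0 < emeasure (Pt y) UNIV" "emeasure (Pt y) N0 = 0"
        show "0 < ennreal (f y) \<longrightarrow> (\<forall>A\<in>sets borel. measure (R y) A / measure (R y) UNIV \<ge> c0 * measure nu A)"
        proof (intro impI ballI)
          assume "0 < ennreal (f y)"
          then have fp: "0 < f y" by simp
          with h have Gy: "Good y" by simp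
          fix A :: "'a set" assume A[measurable]: "A \<in> sets borel"
          interpret PS: subprob_space "Pt y" by (rule subPt)
          define p where "p = measure (Pt y) UNIV"
          have pfin: "emeasure (Pt y) UNIV = ennreal p" unfolding p_def using PS.emeasure_eq_measure by simp
          have p_pos: "p > 0" using h(3) pfin by simp
          have minB: "ennreal (c0' * p) * emeasure nu' B \<le> emeasure (Pt y) B" if B: "B \<in> sets borel" for B
          proof -
            have "c0' * measure nu' B \<le> measure (Pt y) B / p" using h(2) B unfolding p_def by auto
            then have "c0' * p * measure nu' B \<le> measure (Pt y) B" using p_pos by (simp add: field_simps)
            then show ?thesis
              using c0'_pos p_pos by (simp add: N'.emeasure_eq_measure PS.emeasure_eq_measure ennreal_mult''[symmetric] mult.assoc)
          qed
          have le_meas: "scale_measure (ennreal (c0' * p)) nu' \<le> Pt y"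
          proof -
            have "emeasure (scale_measure (ennreal (c0' * p)) nu') B \<le> emeasure (Pt y) B" for B
              by (cases "B \<in> sets borel") (auto simp: minB nu'_sets emeasure_notin_sets)
            then show ?thesis unfolding le_measure_iff by (auto simp: le_fun_def snu' spPt nu'_sets sPt)
          qed
          have intlow: "ennreal (c0' * p) * (\<integral>\<^sup>+x. h x \<partial>nu') \<le> (\<integral>\<^sup>+x. h x \<partial>Pt y)"
            if hm: "h \<in> borel_measurable borel" for h :: "'a \<Rightarrow> ennreal"
          proof -
            have "ennreal (c0' * p) * (\<integral>\<^sup>+x. h x \<partial>nu') = (\<integral>\<^sup>+x. h x \<partial>scale_measure (ennreal (c0' * p)) nu')"
              by (rule nn_integral_scale_measure[symmetric]) (use hm in \<open>simp add: measurable_cong_sets[OF nu'_sets refl]\<close>)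
            also have "\<dots> \<le> (\<integral>\<^sup>+x. h x \<partial>Pt y)"
              by (rule nn_integral_mono_measure[OF _ le_meas]) (simp add: nu'_sets sPt)
            finally show ?thesis .
          qed
          define IA where "IA = (\<integral>\<^sup>+x. ennreal (f x / psi x) * indicator A x \<partial>Pt y)"
          define IU where "IU = (\<integral>\<^sup>+x. ennreal (f x / psi x) \<partial>Pt y)"
          interpret NU: prob_space nu by (rule nu_prob)
          have nuA: "(\<integral>\<^sup>+x. ennreal (f x) * indicator A x \<partial>nu') = ennreal nf * ennreal (measure nu A)"
          proof -
            have fm': "(\<lambda>x. ennreal (f x / nf)) \<in> borel_measurable nu'" unfolding measurable_cong_sets[OF nu'_sets refl] by simp
            have "ennreal (measure nu A) = emeasure nu A" using NU.emeasure_eq_measure by simp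
            also have "\<dots> = (\<integral>\<^sup>+x. ennreal (f x / nf) * indicator A x \<partial>nu')"
              unfolding nu_def by (rule emeasure_density[OF fm']) (simp add: nu'_sets)
            finally have e: "ennreal (measure nu A) = (\<integral>\<^sup>+x. ennreal (f x / nf) * indicator A x \<partial>nu')" .
            have "ennreal nf * (\<integral>\<^sup>+x. ennreal (f x / nf) * indicator A x \<partial>nu') = (\<integral>\<^sup>+x. ennreal nf * (ennreal (f x / nf) * indicator A x) \<partial>nu')"
              by (rule nn_integral_cmult[symmetric]) (unfold measurable_cong_sets[OF nu'_sets refl], measurable)
            also have "\<dots> = (\<integral>\<^sup>+x. ennreal (f x) * indicator A x \<partial>nu')"
              by (rule nn_integral_cong) (use nf_pos f_nonneg in \<open>simp add: mult.assoc[symmetric] ennreal_mult''[symmetric]\<close>)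
            finally show ?thesis using e by simp
          qed
          have IA_low: "ennreal (c0' * p * nf * measure nu A / S1) \<le> IA"
          proof -
            have "ennreal (c0' * p * nf * measure nu A / S1) = ennreal (1 / S1) * (ennreal (c0' * p) * (ennreal nf * ennreal (measure nu A)))"
              using S1p c0'_pos p_pos nf_pos by (simp add: ennreal_mult''[symmetric])
            also have "\<dots> = ennreal (1 / S1) * (ennreal (c0' * p) * (\<integral>\<^sup>+x. ennreal (f x) * indicator A x \<partial>nu'))" using nuA by simp
            also have "\<dots> \<le> ennreal (1 / S1) * (\<integral>\<^sup>+x. ennreal (f x) * indicator A x \<partial>Pt y)"
            proof (rule mult_left_mono)
              have hm: "(\<lambda>x. ennreal (f x) * indicator A x) \<in> borel_measurable borel" by measurable
              show "ennreal (c0' * p) * (\<integral>\<^sup>+x. ennreal (f x) * indicator A x \<partial>nu') \<le> (\<integral>\<^sup>+x. ennreal (f x) * indicator A x \<partial>Pt y)"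
                by (rule intlow[OF hm])
            qed simp
            also have "\<dots> = (\<integral>\<^sup>+x. ennreal (1 / S1) * (ennreal (f x) * indicator A x) \<partial>Pt y)"
              by (rule nn_integral_cmult[symmetric]) (unfold measurable_cong_sets[OF sPt refl], measurable)
            also have "\<dots> \<le> IA" unfolding IA_def
            proof (rule nn_integral_mono)
              fix x
              have "f x / S1 \<le> f x / psi x" using f_nonneg[of x] psi_pos[of x] S1u[of x]
                by (intro divide_left_mono) auto
              then show "ennreal (1/S1) * (ennreal (f x) * indicator A x) \<le> ennreal (f x / psi x) * indicator A x"
                using S1p f_nonneg[of x] by (auto simp: indicator_def ennreal_mult''[symmetric] intro: ennreal_leI)
            qed
            finally show ?thesis .
          qed
          have aeP: "AE x in Pt y. f x \<le> Mf"
          proof -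
            have "N0 \<in> null_sets (Pt y)" using h(4) sPt[of y] N0s Lam_sets by (intro null_setsI) auto
            then have "AE x in Pt y. x \<notin> N0" by (rule AE_not_in)
            then show ?thesis unfolding N0_def by (auto elim!: eventually_mono simp: not_less)
          qed
          have IU_up: "IU \<le> ennreal (Mf * S2 * p)"
          proof -
            have "IU \<le> (\<integral>\<^sup>+x. ennreal (Mf * S2) \<partial>Pt y)" unfolding IU_def
            proof (rule nn_integral_mono_AE)
              show "AE x in Pt y. ennreal (f x / psi x) \<le> ennreal (Mf * S2)"
                using aeP
              proof (rule eventually_mono)
                fix x assume fx: "f x \<le> Mf"
                have "f x * (1 / psi x) \<le> Mf * S2"
                  by (rule mult_mono) (use fx f_nonneg[of x] S2u[of x] psi_pos[of x] Mf_pos in auto)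
                then show "ennreal (f x / psi x) \<le> ennreal (Mf * S2)" by (intro ennreal_leI) simp
              qed
            qed
            also have "\<dots> = ennreal (Mf * S2) * ennreal p" using pfin spPt by simp
            also have "\<dots> = ennreal (Mf * S2 * p)" using p_pos by (simp add: ennreal_mult''[symmetric])
            finally show ?thesis .
          qed
          have IA_IU: "IA \<le> IU" unfolding IA_def IU_def by (intro nn_integral_mono) (auto simp: indicator_def)
          define X where "X = enn2real IA"
          define Y where "Y = enn2real IU"
          have IU_fin: "IU < top" by (rule order.strict_trans1[OF IU_up]) simp
          have IA_fin: "IA < top" by (rule order.strict_trans1[OF IA_IU IU_fin])
          have IAe: "IA = ennreal X" unfolding X_def using IA_fin by simp
          have IUe: "IU = ennreal Y" unfolding Y_def using IU_fin by simp
          have X0: "X \<ge> 0" "Y \<ge> 0" unfolding X_def Y_def by simp_all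
          have L0: "0 \<le> c0' * p * nf * measure nu A / S1" using c0'_pos p_pos nf_pos S1p by simp
          have LX: "c0' * p * nf * measure nu A / S1 \<le> X" using IA_low X0 unfolding IAe by simp
          have XY: "X \<le> Y" using IA_IU X0 unfolding IAe IUe by simp
          have YU: "Y \<le> Mf * S2 * p" using IU_up Mf_pos S2p p_pos unfolding IUe by simp
          define r where "r = a * psi y / f y"
          have r_pos: "r > 0" unfolding r_def using a_pos psi_pos[of y] fp by simp
          have mRA: "measure (R y) A = r * X"
            using emR[OF A, of y] Gy r_pos X0 unfolding measure_def IA_def[symmetric] IAe r_def by (simp add: enn2real_mult)
          have mRU: "measure (R y) UNIV = r * Y"
            using emR[of UNIV y] Gy r_pos X0 unfolding measure_def r_def by (simp add: enn2real_mult IU_def[symmetric] IUe)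
          have ratio: "measure (R y) A / measure (R y) UNIV = X / Y" unfolding mRA mRU using r_pos by simp
          have c0eq: "c0 * measure nu A = (c0' * p * nf * measure nu A / S1) / (Mf * S2 * p)"
            unfolding c0_def using p_pos S1p S2p Mf_pos by (simp add: field_simps)
          show "measure (R y) A / measure (R y) UNIV \<ge> c0 * measure nu A"
            unfolding ratio c0eq by (rule frac_bound[OF L0 LX XY YU]) (use Mf_pos S2p p_pos in simp)
        qed
      qed
      then show ?thesis unfolding pi_dens AE_density[OF fLm] .
      qed
    qed
  qed
  show ?thesis
    unfolding Let_def E_def[symmetric] Mf_def[symmetric] nf_def[symmetric] S1_def[symmetric]
      S2_def[symmetric] c0_def[symmetric] nu_def[symmetric]
    using ac nf_pos c0_pos c0_le nu_prob RD by blast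
qed

end
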